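(* Let $m \ge 1$ be an integer, let $N \ge 0$ and $s$ be integers with $0 \le s \le N$ and $N + m - 1 > 0$, and let $y \in (0,1)$, all held fixed. For real $n > 0$ let $\beta_n$ denote the Beta-Binomial distribution on $\{0,1,\ldots,m\}$ with probability mass function \[ p(l \mid y, n, m, s, N) = \binom{m}{l}\frac{B(l + ny + s,\; m - l + n(1-y) + N - s)}{B(ny + s,\; n(1-y) + N - s)}, \qquad l = 0,1,\ldots,m, \] where $B(\cdot,\cdot)$ is the Beta function. Let $0 < \underline{n} < \overline{n}$. Then \[ y > \frac{s + m - 1}{N + m - 1} \implies \beta_{\overline{n}} \ge_{\mathrm{st}} \beta_{\underline{n}}, \] and \[ y < \frac{s}{N + m - 1} \implies \beta_{\overline{n}} \le_{\mathrm{st}} \beta_{\underline{n}}. \]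
   Context: For two probability distributions $P, Q$ on $\{0,1,\ldots,m\}$, first-order stochastic dominance $P \ge_{\mathrm{st}} Q$ means $P(\{l' : l' > l\}) \ge Q(\{l' : l' > l\})$ for every $l$ (equivalently, the cumulative distribution function of $P$ is pointwise no larger than that of $Q$); $P \le_{\mathrm{st}} Q$ means $Q \ge_{\mathrm{st}} P$. *)

theory Defs
  imports "HOL-Analysis.Analysis"
begin

definition betabin_pmf :: "real \<Rightarrow> real \<Rightarrow> nat \<Rightarrow> int \<Rightarrow> int \<Rightarrow> nat \<Rightarrow> real" where
  "betabin_pmf y n m s N l =
     real (m choose l) *
     Beta (real l + n * y + real_of_int s) (real m - real l + n * (1 - y) + real_of_int N - real_of_int s)
     / Beta (n * y + real_of_int s) (n * (1 - y) + real_of_int N - real_of_int s)"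

definition st_ge :: "nat \<Rightarrow> (nat \<Rightarrow> real) \<Rightarrow> (nat \<Rightarrow> real) \<Rightarrow> bool" where
  "st_ge m P Q \<longleftrightarrow> (\<forall>l. (\<Sum>l'\<in>{l<..m}. P l') \<ge> (\<Sum>l'\<in>{l<..m}. Q l'))"

end

theory Submission
  imports Defs
begin

definition qq :: "real \<Rightarrow> real \<Rightarrow> nat \<Rightarrow> nat \<Rightarrow> real" where
  "qq a b m l = real (m choose l) * pochhammer a l * pochhammer b (m - l) / pochhammer (a + b) m"

lemma Beta_shift:
  fixes x y :: real
  assumes "x > 0" "y > 0"
  shows "Beta (x + real k) (y + real j) = Beta x y * pochhammer x k * pochhammer y j / pochhammer (x + y) (k + j)"
proof -
  have nx: "x \<notin> \<int>\<^sub>\<le>\<^sub>0" using assms by (auto elim!: nonpos_Ints_cases)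
  have ny: "y \<notin> \<int>\<^sub>\<le>\<^sub>0" using assms by (auto elim!: nonpos_Ints_cases)
  have nxy: "x + y \<notin> \<int>\<^sub>\<le>\<^sub>0" using assms by (auto elim!: nonpos_Ints_cases)
  have gp: "Gamma x > 0" "Gamma y > 0" "Gamma (x+y) > 0" using assms by auto
  have g1: "Gamma (x + real k) = pochhammer x k * Gamma x"
    using pochhammer_Gamma[OF nx, of k] gp by (simp add: field_simps)
  have g2: "Gamma (y + real j) = pochhammer y j * Gamma y"
    using pochhammer_Gamma[OF ny, of j] gp by (simp add: field_simps)
  have g3: "Gamma (x + y + real (k + j)) = pochhammer (x + y) (k + j) * Gamma (x + y)"
    using pochhammer_Gamma[OF nxy, of "k+j"] gp by (simp add: field_simps)
  have e: "x + real k + (y + real j) = x + y + real (k + j)" by simp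
  have p: "pochhammer (x + y) (k + j) > 0" using assms by (intro pochhammer_pos) simp
  show ?thesis unfolding Beta_def e g1 g2 g3
    using p assms by (simp add: field_simps)
qed

lemma betabin_qq:
  assumes "a = n * y + real_of_int s" "b = n * (1 - y) + real_of_int N - real_of_int s"
    "a > 0" "b > 0" "l \<le> m"
  shows "betabin_pmf y n m s N l = qq a b m l"
proof -
  have e1: "real l + n * y + real_of_int s = a + real l" using assms by simp
  have e2: "real m - real l + n * (1 - y) + real_of_int N - real_of_int s = b + real (m - l)"
    using assms by (simp add: of_nat_diff)
  have B: "Beta (a + real l) (b + real (m - l)) = Beta a b * pochhammer a l * pochhammer b (m - l) / pochhammer (a + b) m"
    using Beta_shift[OF assms(3,4), of l "m - l"] assms(5) by simp
  have Bp: "Beta a b > 0" using assms(3,4) by (simp add: Beta_def)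
  have e3: "Beta (n * y + real_of_int s) (n * (1 - y) + real_of_int N - real_of_int s) = Beta a b"
    using assms by simp
  show ?thesis unfolding betabin_pmf_def e1 e2 e3 B qq_def using Bp by simp
qed

lemma qq_pos: "a > 0 \<Longrightarrow> b > 0 \<Longrightarrow> l \<le> m \<Longrightarrow> qq a b m l > 0"
  unfolding qq_def by (intro divide_pos_pos mult_pos_pos pochhammer_pos) auto

lemma qq_sum: "a > 0 \<Longrightarrow> b > 0 \<Longrightarrow> (\<Sum>l\<le>m. qq a b m l) = 1"
proof -
  assume ab: "a > 0" "b > 0"
  have p: "pochhammer (a + b) m > 0" using ab by (intro pochhammer_pos) simp
  have "(\<Sum>l\<le>m. qq a b m l) = (\<Sum>l\<le>m. real (m choose l) * pochhammer a l * pochhammer b (m - l)) / pochhammer (a + b) m"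
    unfolding qq_def by (simp add: sum_divide_distrib)
  also have "\<dots> = 1" using p by (simp flip: pochhammer_binomial_sum)
  finally show ?thesis .
qed

lemma choose_rec: "l < m \<Longrightarrow> real (m choose Suc l) * real (Suc l) = real (m choose l) * real (m - l)"
proof -
  assume "l < m"
  have "Suc l * (m choose Suc l) = m * ((m - 1) choose l)" by (rule binomial_absorption)
  also have "\<dots> = (m - l) * (m choose l)" by (rule binomial_absorb_comp[symmetric])
  finally have "(m choose Suc l) * Suc l = (m choose l) * (m - l)" by (simp add: mult.commute)
  then show ?thesis by (metis of_nat_mult)
qed

lemma aux_alg: "(c1::real) * s = c0 * mm \<Longrightarrow> (c1 * (A * X) * B / P) * (s * Y) = (c0 * A * (B * Y) / P) * (X * mm)"
proof -
  assume h: "c1 * s = c0 * mm"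
  have "(c1 * (A * X) * B / P) * (s * Y) = (c1 * s) * (A * X * B * Y) / P" by (simp add: mult_ac)
  also have "\<dots> = (c0 * mm) * (A * X * B * Y) / P" by (simp add: h)
  also have "\<dots> = (c0 * A * (B * Y) / P) * (X * mm)" by (simp add: mult_ac)
  finally show ?thesis .
qed

lemma qq_rec:
  assumes "l < m"
  shows "qq a b m (Suc l) * (real (Suc l) * (b + real (m - Suc l))) = qq a b m l * ((a + real l) * real (m - l))"
proof -
  have mm: "m - l = Suc (m - Suc l)" using assms by simp
  have pb: "pochhammer b (m - l) = pochhammer b (m - Suc l) * (b + real (m - Suc l))"
    unfolding mm pochhammer_Suc by simp
  have c: "real (m choose Suc l) * real (Suc l) = real (m choose l) * real (m - l)"
    using choose_rec[OF assms] .
  show ?thesis unfolding qq_def pb pochhammer_Suc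
    by (rule aux_alg[OF c])
qed

lemma aux2: "(ph::real) * qt \<le> pt * qh \<Longrightarrow> ph + pt = qh + qt \<Longrightarrow> (ph + pt) * qt \<le> (ph + pt) * pt"
proof -
  assume h: "ph * qt \<le> pt * qh" "ph + pt = qh + qt"
  have "(ph + pt) * qt = ph * qt + pt * qt" by (simp add: algebra_simps)
  also have "\<dots> \<le> pt * qh + pt * qt" using h(1) by simp
  also have "\<dots> = pt * (qh + qt)" by (simp add: algebra_simps)
  also have "\<dots> = (ph + pt) * pt" using h(2) by (simp add: mult.commute)
  finally show ?thesis .
qed

lemma mlr_dom:
  fixes P Q :: "nat \<Rightarrow> real"
  assumes Pp: "\<And>l. l \<le> m \<Longrightarrow> P l > 0" and Qp: "\<And>l. l \<le> m \<Longrightarrow> Q l > 0"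
    and mlr: "\<And>l. l < m \<Longrightarrow> P l * Q (Suc l) \<le> P (Suc l) * Q l"
    and tot: "(\<Sum>l\<le>m. P l) = (\<Sum>l\<le>m. Q l)"
  shows "st_ge m P Q"
  unfolding st_ge_def
proof
  fix l
  define R where "R k = P k / Q k" for k
  have Rs: "R k \<le> R (Suc k)" if "k < m" for k
    using mlr[OF that] Qp[of k] Qp[of "Suc k"] that unfolding R_def
    by (simp add: divide_simps mult.commute)
  have Rm: "R i \<le> R (i + d)" if "i + d \<le> m" for i d
    using that
  proof (induction d)
    case 0 then show ?case by simp
  next
    case (Suc d)
    then have "R i \<le> R (i + d)" by simp
    also have "\<dots> \<le> R (Suc (i + d))" using Rs Suc.prems by simp
    finally show ?case by simp
  qed
  have cross: "P i * Q j \<le> P j * Q i" if "i \<le> j" "j \<le> m" for i j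
  proof -
    have "R i \<le> R j" using Rm[of i "j - i"] that by simp
    then show ?thesis using Qp[of i] Qp[of j] that unfolding R_def
      by (simp add: divide_simps mult.commute)
  qed
  show "(\<Sum>l'\<in>{l<..m}. Q l') \<le> (\<Sum>l'\<in>{l<..m}. P l')"
  proof (cases "l < m")
    case False then show ?thesis by simp
  next
    case True
    let ?H = "{..l}" and ?T = "{l<..m}"
    have dis: "{..m} = ?H \<union> ?T" "?H \<inter> ?T = {}" using True by auto
    have sP: "(\<Sum>l\<le>m. P l) = sum P ?H + sum P ?T" unfolding dis(1) by (rule sum.union_disjoint) auto
    have sQ: "(\<Sum>l\<le>m. Q l) = sum Q ?H + sum Q ?T" unfolding dis(1) by (rule sum.union_disjoint) auto
    have "(\<Sum>i\<in>?H. \<Sum>j\<in>?T. P i * Q j) \<le> (\<Sum>i\<in>?H. \<Sum>j\<in>?T. P j * Q i)"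
      by (intro sum_mono) (auto intro!: cross)
    then have ineq: "sum P ?H * sum Q ?T \<le> sum P ?T * sum Q ?H"
      by (simp add: sum_product mult.commute)
    have S: "(\<Sum>l\<le>m. P l) > 0"
      by (rule sum_pos2[of _ 0]) (auto intro: less_imp_le Pp)
    have "(\<Sum>l\<le>m. P l) * sum Q ?T \<le> (\<Sum>l\<le>m. P l) * sum P ?T"
      unfolding sP by (rule aux2[OF ineq]) (use sP sQ tot in simp)
    then show ?thesis using S by simp
  qed
qed

lemma qq_dom:
  assumes a1: "a1 > 0" and b1: "b1 > 0" and a2: "a2 > 0" and b2: "b2 > 0"
    and c: "\<And>l. l < m \<Longrightarrow> (a1 + real l) * (b2 + real (m - Suc l)) \<le> (a2 + real l) * (b1 + real (m - Suc l))"
  shows "st_ge m (qq a2 b2 m) (qq a1 b1 m)"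
proof (rule mlr_dom)
  show "(\<Sum>l\<le>m. qq a2 b2 m l) = (\<Sum>l\<le>m. qq a1 b1 m l)" using qq_sum a1 b1 a2 b2 by simp
  show "qq a2 b2 m l > 0" if "l \<le> m" for l using qq_pos a2 b2 that by simp
  show "qq a1 b1 m l > 0" if "l \<le> m" for l using qq_pos a1 b1 that by simp
  fix l assume l: "l < m"
  define P0 where "P0 = qq a2 b2 m l"
  define Q0 where "Q0 = qq a1 b1 m l"
  define P1 where "P1 = qq a2 b2 m (Suc l)"
  define Q1 where "Q1 = qq a1 b1 m (Suc l)"
  define S where "S = real (Suc l)"
  define M where "M = real (m - l)"
  have rP: "P1 * (S * (b2 + real (m - Suc l))) = P0 * ((a2 + real l) * M)"
    using qq_rec[OF l, of a2 b2] unfolding P0_def P1_def S_def M_def .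
  have rQ: "Q1 * (S * (b1 + real (m - Suc l))) = Q0 * ((a1 + real l) * M)"
    using qq_rec[OF l, of a1 b1] unfolding Q0_def Q1_def S_def M_def .
  have pos: "P0 > 0" "Q0 > 0" unfolding P0_def Q0_def using qq_pos a1 b1 a2 b2 l by auto
  have Sp: "S > 0" unfolding S_def by simp
  have Mp: "M > 0" unfolding M_def using l by simp
  have B1: "b1 + real (m - Suc l) > 0" "b2 + real (m - Suc l) > 0" using b1 b2 by auto
  have cc: "(a1 + real l) * (b2 + real (m - Suc l)) \<le> (a2 + real l) * (b1 + real (m - Suc l))" using c[OF l] .
  define D1 where "D1 = b1 + real (m - Suc l)"
  define D2 where "D2 = b2 + real (m - Suc l)"
  define A1 where "A1 = a1 + real l"
  define A2 where "A2 = a2 + real l"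
  have rP': "P1 * (S * D2) = P0 * (A2 * M)" using rP unfolding D2_def A2_def .
  have rQ': "Q1 * (S * D1) = Q0 * (A1 * M)" using rQ unfolding D1_def A1_def .
  have cc': "A1 * D2 \<le> A2 * D1" using cc unfolding A1_def A2_def D1_def D2_def .
  have K: "(S * D2) * (S * D1) > 0" using Sp B1 unfolding D1_def D2_def by simp
  have "(P0 * Q1) * ((S * D2) * (S * D1)) = (P0 * (S * D2)) * (Q1 * (S * D1))" by (simp only: mult_ac)
  also have "\<dots> = (P0 * (S * D2)) * (Q0 * (A1 * M))" by (simp only: rQ')
  also have "\<dots> = (P0 * Q0 * M * S) * (A1 * D2)" by (simp only: mult_ac)
  also have "\<dots> \<le> (P0 * Q0 * M * S) * (A2 * D1)"
    using pos Mp Sp cc' by (intro mult_left_mono) auto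
  also have "\<dots> = (P0 * (A2 * M)) * (Q0 * (S * D1))" by (simp only: mult_ac)
  also have "\<dots> = (P1 * (S * D2)) * (Q0 * (S * D1))" by (simp only: rP')
  also have "\<dots> = (P1 * Q0) * ((S * D2) * (S * D1))" by (simp only: mult_ac)
  finally have "(P0 * Q1) * ((S * D2) * (S * D1)) \<le> (P1 * Q0) * ((S * D2) * (S * D1))" .
  then have "P0 * Q1 \<le> P1 * Q0" using K mult_le_cancel_right_pos by blast
  then show "qq a2 b2 m l * qq a1 b1 m (Suc l) \<le> qq a2 b2 m (Suc l) * qq a1 b1 m l"
    unfolding P0_def Q0_def P1_def Q1_def .
qed

lemma st_ge_cong: "st_ge m P Q \<Longrightarrow> (\<And>l. l \<le> m \<Longrightarrow> P l = P' l) \<Longrightarrow> (\<And>l. l \<le> m \<Longrightarrow> Q l = Q' l) \<Longrightarrow> st_ge m P' Q'"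
  unfolding st_ge_def
proof
  fix l assume h: "\<forall>l. sum Q {l<..m} \<le> sum P {l<..m}" "\<And>l. l \<le> m \<Longrightarrow> P l = P' l" "\<And>l. l \<le> m \<Longrightarrow> Q l = Q' l"
  have "sum Q' {l<..m} = sum Q {l<..m}" by (rule sum.cong) (auto simp: h(3))
  moreover have "sum P' {l<..m} = sum P {l<..m}" by (rule sum.cong) (auto simp: h(2))
  ultimately show "sum Q' {l<..m} \<le> sum P' {l<..m}" using h(1) by simp
qed

lemma diff_id:
  fixes n1 n2 y s N c d :: real
  shows "(n2 * y + s + d) * (n1 * (1 - y) + N - s + c) - (n1 * y + s + d) * (n2 * (1 - y) + N - s + c)
     = (n2 - n1) * (y * (N + c + d) - (s + d))"
  by (simp add: algebra_simps)

theorem theorem2: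
  fixes m :: nat and N s :: int and y n_lo n_hi :: real
  assumes "m \<ge> 1" and "N \<ge> 0" and "0 \<le> s" and "s \<le> N" and "N + int m - 1 > 0"
    and "0 < y" and "y < 1"
    and "0 < n_lo" and "n_lo < n_hi"
  shows "(y > (real_of_int s + real m - 1) / (real_of_int N + real m - 1) \<longrightarrow>
            st_ge m (betabin_pmf y n_hi m s N) (betabin_pmf y n_lo m s N))
       \<and> (y < real_of_int s / (real_of_int N + real m - 1) \<longrightarrow>
            st_ge m (betabin_pmf y n_lo m s N) (betabin_pmf y n_hi m s N))"
proof -
  define a1 where "a1 = n_lo * y + real_of_int s"
  define b1 where "b1 = n_lo * (1 - y) + real_of_int N - real_of_int s"
  define a2 where "a2 = n_hi * y + real_of_int s"
  define b2 where "b2 = n_hi * (1 - y) + real_of_int N - real_of_int s"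
  have nh: "0 < n_hi" using assms by simp
  have sN: "real_of_int s \<le> real_of_int N" "0 \<le> real_of_int s" using assms by simp_all
  have a1p: "a1 > 0" unfolding a1_def using assms sN by (simp add: add_pos_nonneg)
  have a2p: "a2 > 0" unfolding a2_def using assms nh sN by (simp add: add_pos_nonneg)
  have b1p: "b1 > 0" unfolding b1_def using assms sN
    by (smt (verit) mult_pos_pos)
  have b2p: "b2 > 0" unfolding b2_def using assms nh sN
    by (smt (verit) mult_pos_pos)
  have E1: "\<And>l. l \<le> m \<Longrightarrow> betabin_pmf y n_lo m s N l = qq a1 b1 m l"
    using betabin_qq[OF a1_def b1_def a1p b1p] .
  have E2: "\<And>l. l \<le> m \<Longrightarrow> betabin_pmf y n_hi m s N l = qq a2 b2 m l"
    using betabin_qq[OF a2_def b2_def a2p b2p] .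
  define D where "D = real_of_int N + real m - 1"
  have Dp: "D > 0" unfolding D_def using assms(5) by linarith
  have DI: "\<And>l. l < m \<Longrightarrow> (a2 + real l) * (b1 + real (m - Suc l)) - (a1 + real l) * (b2 + real (m - Suc l))
      = (n_hi - n_lo) * (y * D - (real_of_int s + real l))"
  proof -
    fix l assume l: "l < m"
    have c: "real (m - Suc l) = real m - real l - 1" using l by (simp add: of_nat_diff)
    have "real_of_int N + (real m - real l - 1) + real l = D" unfolding D_def by simp
    then show "(a2 + real l) * (b1 + real (m - Suc l)) - (a1 + real l) * (b2 + real (m - Suc l))
      = (n_hi - n_lo) * (y * D - (real_of_int s + real l))"
      unfolding a1_def a2_def b1_def b2_def c
      using diff_id[of n_hi y "real_of_int s" "real l" n_lo "real_of_int N" "real m - real l - 1"]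
      by simp
  qed
  have nd: "n_hi - n_lo > 0" using assms by simp
  show ?thesis
  proof (intro conjI impI)
    assume h: "y > (real_of_int s + real m - 1) / (real_of_int N + real m - 1)"
    then have h': "y * D > real_of_int s + real m - 1" using Dp unfolding D_def
      by (simp add: pos_divide_less_eq)
    have "st_ge m (qq a2 b2 m) (qq a1 b1 m)"
    proof (rule qq_dom[OF a1p b1p a2p b2p])
      fix l assume l: "l < m"
      have "real l \<le> real m - 1" using l by linarith
      then have "y * D - (real_of_int s + real l) > 0" using h' by linarith
      then have "(n_hi - n_lo) * (y * D - (real_of_int s + real l)) \<ge> 0" using nd by simp
      then show "(a1 + real l) * (b2 + real (m - Suc l)) \<le> (a2 + real l) * (b1 + real (m - Suc l))"
        using DI[OF l] by linarith
    qed
    then show "st_ge m (betabin_pmf y n_hi m s N) (betabin_pmf y n_lo m s N)"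
      by (rule st_ge_cong) (simp_all add: E1 E2)
  next
    assume h: "y < real_of_int s / (real_of_int N + real m - 1)"
    then have h': "y * D < real_of_int s" using Dp unfolding D_def
      by (simp add: pos_less_divide_eq)
    have "st_ge m (qq a1 b1 m) (qq a2 b2 m)"
    proof (rule qq_dom[OF a2p b2p a1p b1p])
      fix l assume l: "l < m"
      have "y * D - (real_of_int s + real l) < 0" using h' by simp
      then have "(n_hi - n_lo) * (y * D - (real_of_int s + real l)) \<le> 0" using nd
        by (simp add: mult_pos_neg less_imp_le)
      then show "(a2 + real l) * (b1 + real (m - Suc l)) \<le> (a1 + real l) * (b2 + real (m - Suc l))"
        using DI[OF l] by linarith
    qed
    then show "st_ge m (betabin_pmf y n_lo m s N) (betabin_pmf y n_hi m s N)"
      by (rule st_ge_cong) (simp_all add: E1 E2)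
  qed
qed

end
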